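(* Let $P\subset\mathbb{R}^d$ be a finite set, let $r$ be the radius of the minimum enclosing ball of $P$, and let $M$ be a maximum-weight matching of $P$ (i.e. a matching attaining $\operatorname{opt}_{\mathrm{max\text{-}match}}(P)$). Then there exists a ball of radius $r/2$ that contains both endpoints $p,q$ of every pair $\{p,q\}\in M$ with $\|p-q\|\le r/4$.
   Context: Norms are Euclidean. A matching of $P$ is a matching in the complete graph on $P$, with weight $\sum_{\{p,q\}\in M}\|p-q\|$; $\operatorname{opt}_{\mathrm{max\text{-}match}}(P)$ is the maximum weight over all matchings of $P$. *)

theory Defs
  imports "HOL-Analysis.Analysis"
begin

definition is_matching :: "'a set \<Rightarrow> 'a set set \<Rightarrow> bool" where
  "is_matching P M \<longleftrightarrow>
     (\<forall>e\<in>M. e \<subseteq> P \<and> card e = 2) \<and>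
     (\<forall>e\<in>M. \<forall>e'\<in>M. e \<noteq> e' \<longrightarrow> e \<inter> e' = {})"

definition matching_weight :: "'a::real_normed_vector set set \<Rightarrow> real" where
  "matching_weight M = (\<Sum>e\<in>M. (THE w. \<exists>p q. e = {p, q} \<and> w = norm (p - q)))"

definition is_max_matching :: "'a::real_normed_vector set \<Rightarrow> 'a set set \<Rightarrow> bool" where
  "is_max_matching P M \<longleftrightarrow> is_matching P M \<and>
     (\<forall>M'. is_matching P M' \<longrightarrow> matching_weight M' \<le> matching_weight M)"

definition meb_radius :: "'a::euclidean_space set \<Rightarrow> real" where
  "meb_radius P = Inf {r. r \<ge> 0 \<and> (\<exists>c. P \<subseteq> cball c r)}"

end

theory Submission
  imports Defs
begin

lemma wt_pair: "(THE w. \<exists>a b. {p, q} = {a, b} \<and> w = norm (a - b)) = norm (p - q)"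
proof (rule the_equality)
  show "\<exists>a b. {p, q} = {a, b} \<and> norm (p - q) = norm (a - b)" by blast
next
  fix w assume "\<exists>a b. {p, q} = {a, b} \<and> w = norm (a - b)"
  then obtain a b where "{p,q} = {a,b}" "w = norm (a - b)" by blast
  then show "w = norm (p - q)"
    by (metis doubleton_eq_iff norm_minus_commute)
qed

lemma swap_bound:
  fixes P :: "'a::euclidean_space set"
  assumes fin: "finite P" and mm: "is_max_matching P M"
    and e1: "{p, q} \<in> M" and e2: "{p', q'} \<in> M"
  shows "norm (p - p') \<le> norm (p - q) + norm (p' - q')"
proof (cases "{p,q} = {p',q'}")
  case True
  have "p' \<in> {p', q'}" by simp
  then have "p' \<in> {p, q}" by (simp only: True)
  then have "p' = p \<or> p' = q" by simp
  then show ?thesis by (auto simp: norm_minus_commute)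
next
  case False
  have mat: "is_matching P M" using mm by (simp add: is_max_matching_def)
  have mat1: "\<forall>e\<in>M. e \<subseteq> P \<and> card e = 2" using mat unfolding is_matching_def by blast
  have mat2: "\<forall>e\<in>M. \<forall>e'\<in>M. e \<noteq> e' \<longrightarrow> e \<inter> e' = {}" using mat unfolding is_matching_def by blast
  have disj: "{p,q} \<inter> {p',q'} = {}" using mat2 e1 e2 False by simp
  have c1: "card {p,q} = 2" and c2: "card {p',q'} = 2"
    using mat1 e1 e2 by simp_all
  have pq: "p \<noteq> q" using c1 by auto
  have pq': "p' \<noteq> q'" using c2 by auto
  have sub1: "{p,q} \<subseteq> P" using bspec[OF mat1 e1] by (rule conjunct1)
  have sub2: "{p',q'} \<subseteq> P" using bspec[OF mat1 e2] by (rule conjunct1)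
  have finM: "finite M"
  proof -
    have "M \<subseteq> Pow P" using mat1 by auto
    moreover have "finite (Pow P)" using fin by simp
    ultimately show ?thesis by (rule finite_subset)
  qed
  define R where "R = M - {{p,q},{p',q'}}"
  define M' where "M' = insert {p,p'} (insert {q,q'} R)"
  have Rdisj: "\<And>e. e \<in> R \<Longrightarrow> e \<inter> {p,q,p',q'} = {}"
  proof -
    fix e assume "e \<in> R"
    then have eM: "e \<in> M" and ne1: "e \<noteq> {p,q}" and ne2: "e \<noteq> {p',q'}" unfolding R_def by blast+
    have "e \<inter> {p,q} = {}" using mat2 eM e1 ne1 by simp
    moreover have "e \<inter> {p',q'} = {}" using mat2 eM e2 ne2 by simp
    ultimately show "e \<inter> {p,q,p',q'} = {}" by blast
  qed
  have n1: "{p,p'} \<notin> insert {q,q'} R"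
  proof
    assume "{p,p'} \<in> insert {q,q'} R"
    then show False
    proof
      assume "{p,p'} = {q,q'}" then show False using pq disj by (auto simp: doubleton_eq_iff)
    next
      assume "{p,p'} \<in> R" then show False using Rdisj by blast
    qed
  qed
  have n2: "{q,q'} \<notin> R" using Rdisj by blast
  have pp': "p \<noteq> p'" and qq': "q \<noteq> q'" and pq'': "p \<noteq> q'" and qp': "q \<noteq> p'"
    using disj by auto
  have Rm: "\<And>e e'. e \<in> R \<Longrightarrow> e' \<in> R \<Longrightarrow> e \<noteq> e' \<Longrightarrow> e \<inter> e' = {}"
    using mat1 mat2 unfolding R_def by blast
  have RP: "\<And>e. e \<in> R \<Longrightarrow> e \<subseteq> P \<and> card e = 2"
    using mat1 mat2 unfolding R_def by blast
  have M'P: "\<forall>e\<in>M'. e \<subseteq> P \<and> card e = 2"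
  proof
    fix e assume "e \<in> M'"
    then consider "e = {p,p'}" | "e = {q,q'}" | "e \<in> R" unfolding M'_def by blast
    then show "e \<subseteq> P \<and> card e = 2"
    proof cases
      case 1 then show ?thesis using pp' sub1 sub2 by simp
    next
      case 2 then show ?thesis using qq' sub1 sub2 by simp
    next
      case 3 then show ?thesis using RP by blast
    qed
  qed
  have matM': "is_matching P M'"
    unfolding is_matching_def
  proof (rule conjI[OF M'P], intro ballI impI)
    fix e e' assume a: "e \<in> M'" "e' \<in> M'" "e \<noteq> e'"
    from a(1) consider "e = {p,p'}" | "e = {q,q'}" | "e \<in> R" unfolding M'_def by blast
    then show "e \<inter> e' = {}"
    proof cases
      case 1
      from a(2) consider "e' = {p,p'}" | "e' = {q,q'}" | "e' \<in> R" unfolding M'_def by blast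
      then show ?thesis
      proof cases
        case 1 then show ?thesis using a \<open>e = {p,p'}\<close> by simp
      next
        case 2 then show ?thesis using \<open>e = {p,p'}\<close> pq pq' qq' qp' pq'' pp' disj by auto
      next
        case 3 then show ?thesis using \<open>e = {p,p'}\<close> Rdisj[of e'] by auto
      qed
    next
      case 2
      from a(2) consider "e' = {p,p'}" | "e' = {q,q'}" | "e' \<in> R" unfolding M'_def by blast
      then show ?thesis
      proof cases
        case 1 then show ?thesis using \<open>e = {q,q'}\<close> pq pq' qq' qp' pq'' pp' disj by auto
      next
        case 2 then show ?thesis using a \<open>e = {q,q'}\<close> by simp
      next
        case 3 then show ?thesis using \<open>e = {q,q'}\<close> Rdisj[of e'] by auto
      qed
    next
      case 3
      from a(2) consider "e' = {p,p'}" | "e' = {q,q'}" | "e' \<in> R" unfolding M'_def by blast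
      then show ?thesis
      proof cases
        case 1 then show ?thesis using \<open>e \<in> R\<close> Rdisj[of e] by auto
      next
        case 2 then show ?thesis using \<open>e \<in> R\<close> Rdisj[of e] by auto
      next
        case 3 then show ?thesis using a \<open>e \<in> R\<close> Rm by blast
      qed
    qed
  qed
  have "matching_weight M' \<le> matching_weight M" using mm matM' by (simp add: is_max_matching_def)
  moreover have "matching_weight M' = norm (p - p') + norm (q - q') + matching_weight R"
    unfolding M'_def matching_weight_def using finM n1 n2
    by (simp add: R_def wt_pair)
  moreover have "matching_weight M = norm (p - q) + norm (p' - q') + matching_weight R"
  proof -
    have "matching_weight M = norm (p - q) + matching_weight (M - {{p,q}})"
      unfolding matching_weight_def using finM e1 by (simp add: sum.remove wt_pair)
    also have "matching_weight (M - {{p,q}}) = norm (p' - q') + matching_weight R"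
    proof -
      have "{p',q'} \<in> M - {{p,q}}" using e2 False by auto
      then have "matching_weight (M - {{p,q}}) = norm (p' - q') + matching_weight (M - {{p,q}} - {{p',q'}})"
        unfolding matching_weight_def using finM by (simp add: sum.remove wt_pair)
      moreover have "M - {{p,q}} - {{p',q'}} = R" by (auto simp: R_def)
      ultimately show ?thesis by simp
    qed
    finally show ?thesis by simp
  qed
  ultimately show ?thesis by (smt (verit) norm_ge_zero)
qed

theorem mainTheorem3:
  fixes P :: "'a::euclidean_space set" and M :: "'a set set"
  assumes "finite P"
    and "is_max_matching P M"
  shows "\<exists>c. \<forall>p q. {p, q} \<in> M \<and> norm (p - q) \<le> meb_radius P / 4 \<longrightarrow>
            p \<in> cball c (meb_radius P / 2) \<and> q \<in> cball c (meb_radius P / 2)"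
proof (cases "\<exists>p0 q0. {p0, q0} \<in> M \<and> norm (p0 - q0) \<le> meb_radius P / 4")
  case False
  then show ?thesis by blast
next
  case True
  then obtain p0 q0 where h0: "{p0, q0} \<in> M" "norm (p0 - q0) \<le> meb_radius P / 4" by blast
  show ?thesis
  proof (rule exI[of _ p0], intro allI impI)
    fix p q assume h: "{p, q} \<in> M \<and> norm (p - q) \<le> meb_radius P / 4"
    have a: "norm (p0 - p) \<le> meb_radius P / 2"
      using swap_bound[OF assms h0(1), of p q] h h0 by linarith
    have h': "{q, p} \<in> M" "norm (q - p) \<le> meb_radius P / 4"
      using h by (auto simp: insert_commute norm_minus_commute)
    have b: "norm (p0 - q) \<le> meb_radius P / 2"
      using swap_bound[OF assms h0(1) h'(1)] h' h0 by linarith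
    show "p \<in> cball p0 (meb_radius P / 2) \<and> q \<in> cball p0 (meb_radius P / 2)"
      using a b by (simp add: dist_norm)
  qed
qed

end
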